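(* Let $d$ be a thin dimension vector with $e(d)=1$, let $b=b_1$ be the last position of the unique internal even string of ones, and let $J=J(d)$, $c=\max J$ and $T=\Delta(J)$. Let $\phi^{b-1}:P(b)\to P(b-1)$ be the unique homomorphism sending the last basis vector of $P(b)_t$ to the last basis vector of $P(b-1)_t$, and $\phi^{b}:P(b)\to P(c)$ the unique homomorphism sending the last basis vector $e_r$ of $P(b)_t=k^r$ to $e_r\in P(c)_t$. Then $\psi=(\phi^{b-1},\phi^b):P(b)\to P(b-1)\oplus P(c)$ is injective and its cokernel is isomorphic to $T$; that is, $0\to P(b)\xrightarrow{\psi}P(b-1)\oplus P(c)\to T\to 0$ is a projective resolution of $T$.
   Context: Let $k$ be an algebraically closed field. A thin dimension vector is $d=(d_1,\dots,d_t)\in\{0,1\}^t$ with $d_1=d_t=1$ and no two consecutive entries equal to $0$. Write its entries as maximal strings of consecutive ones of lengths $a_0,a_1,\dots,a_{r+1}$ (in order, separated by single zeros); the strings of lengths $a_1,\dots,a_r$ are called internal, and $e(d)=\#\{1\le i\le r: a_i\text{ even}\}$. Let $b_1<\dots<b_{e(d)}$ be the positions of the last entries of the internal strings of even length. Define $J(d)$ as the set of $j\in\{1,\dots,t\}$ such that either $j\le b_1-1$ and $j\equiv b_1-1\pmod 2$; or $b_i+2\le j\le b_{i+1}-1$ and $j\equiv b_i \pmod 2$ for some $1\le i<e(d)$; or $j\ge b_{e(d)}+2$ and $j\equiv b_{e(d)}\pmod 2$. $\mathcal A_{t,1}$ is the quotient of the path algebra over $k$ of the quiver with vertices $1,\dots,t$,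 arrows $\alpha_i:i\to i+1$ ($1\le i\le t-1$) and $\beta_j:j+2\to j$ ($1\le j\le t-2$), by the relations $\beta_1\alpha_2=0$ and $\beta_{i+1}\alpha_{i+2}=\alpha_i\beta_i$ for $1\le i\le t-3$ (compositions right to left); modules are representations satisfying these relations. A subset $J\subseteq\{1,\dots,t\}$ is standard if $j\in J\Rightarrow j+1\notin J$. For nonempty standard $J$, $\Delta(J)_i=k^{l}$ with $l=\#\{j\in J: j\le i\}$ and basis $e_1,\dots,e_l$; $\alpha_i$ is the inclusion $e_h\mapsto e_h$, and $\beta_j(e_h)=e_{h-1}$ for $h\ge 2$, $\beta_j(e_1)=0$. Put $\Delta(i)=\Delta(\{i\})$ and $P(i)=\Delta(\{i': 1\le i'\le i,\ i'\equiv i\pmod 2\})$; $P(i)$ is the projective cover of $\Delta(i)$. *)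

theory Defs
  imports "HOL-Computational_Algebra.Polynomial"
begin

text \<open>A dimension vector d is a function on positions 1..t (values outside are ignored).\<close>
definition thin_dimvec :: "nat \<Rightarrow> (nat \<Rightarrow> nat) \<Rightarrow> bool" where
  "thin_dimvec t d \<longleftrightarrow> t \<ge> 1 \<and> (\<forall>i\<in>{1..t}. d i \<in> {0,1}) \<and> d 1 = 1 \<and> d t = 1 \<and>
     (\<forall>i. 1 \<le> i \<and> i < t \<longrightarrow> \<not> (d i = 0 \<and> d (i+1) = 0))"

text \<open>Last positions of the internal maximal strings of ones of even length
  (internal = neither the first nor the last string, i.e. preceded and followed by a zero).\<close>
definition internal_even_ends :: "nat \<Rightarrow> (nat \<Rightarrow> nat) \<Rightarrow> nat set" where
  "internal_even_ends t d = {e. \<exists>s. 1 < s \<and> s \<le> e \<and> e < t \<and> (\<forall>i\<in>{s..e}. d i = 1) \<and>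
      d (s - 1) = 0 \<and> d (e + 1) = 0 \<and> even (e - s + 1)}"

definition e_num :: "nat \<Rightarrow> (nat \<Rightarrow> nat) \<Rightarrow> nat" where
  "e_num t d = card (internal_even_ends t d)"

definition b_pos :: "nat \<Rightarrow> (nat \<Rightarrow> nat) \<Rightarrow> nat \<Rightarrow> nat" where
  "b_pos t d i = sorted_list_of_set (internal_even_ends t d) ! (i - 1)"

definition J_set :: "nat \<Rightarrow> (nat \<Rightarrow> nat) \<Rightarrow> nat set" where
  "J_set t d = (let e = e_num t d; b = b_pos t d in
     {j \<in> {1..t}.
        (e \<ge> 1 \<and> j \<le> b 1 - 1 \<and> j mod 2 = (b 1 - 1) mod 2)
      \<or> (\<exists>i. 1 \<le> i \<and> i < e \<and> b i + 2 \<le> j \<and> j \<le> b (i+1) - 1 \<and> j mod 2 = b i mod 2)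
      \<or> (e \<ge> 1 \<and> j \<ge> b e + 2 \<and> j mod 2 = b e mod 2)})"

text \<open>Vectors of k^n are functions nat \<Rightarrow> k supported on coordinates 1..n
  (coordinate h is the coefficient of the basis vector e_h).\<close>
type_synonym 'k vec = "nat \<Rightarrow> 'k"

definition space :: "nat \<Rightarrow> ('k::zero) vec set" where
  "space n = {v. \<forall>h. (h = 0 \<or> n < h) \<longrightarrow> v h = 0}"

definition basis_vec :: "nat \<Rightarrow> ('k::{zero,one}) vec" where
  "basis_vec h = (\<lambda>x. if x = h then 1 else 0)"

definition linear_on :: "nat \<Rightarrow> nat \<Rightarrow> (('k::field) vec \<Rightarrow> 'k vec) \<Rightarrow> bool" where
  "linear_on m n f \<longleftrightarrow> (\<forall>v\<in>space m. f v \<in> space n) \<and>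
     (\<forall>u\<in>space m. \<forall>v\<in>space m. f (\<lambda>h. u h + v h) = (\<lambda>h. f u h + f v h)) \<and>
     (\<forall>c. \<forall>v\<in>space m. f (\<lambda>h. c * v h) = (\<lambda>h. c * f v h))"

text \<open>A representation of the quiver of A_{t,1}: dimension at each vertex, the maps
  alpha_i : i \<rightarrow> i+1 and beta_j : j+2 \<rightarrow> j.\<close>
record 'k rep =
  rdim :: "nat \<Rightarrow> nat"
  ralpha :: "nat \<Rightarrow> 'k vec \<Rightarrow> 'k vec"
  rbeta :: "nat \<Rightarrow> 'k vec \<Rightarrow> 'k vec"

definition rep_hom :: "nat \<Rightarrow> ('k::field) rep \<Rightarrow> 'k rep \<Rightarrow> (nat \<Rightarrow> 'k vec \<Rightarrow> 'k vec) \<Rightarrow> bool" where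
  "rep_hom t M N f \<longleftrightarrow>
     (\<forall>i\<in>{1..t}. linear_on (rdim M i) (rdim N i) (f i)) \<and>
     (\<forall>i. 1 \<le> i \<and> i + 1 \<le> t \<longrightarrow> (\<forall>v\<in>space (rdim M i).
         f (i+1) (ralpha M i v) = ralpha N i (f i v))) \<and>
     (\<forall>j. 1 \<le> j \<and> j + 2 \<le> t \<longrightarrow> (\<forall>v\<in>space (rdim M (j+2)).
         f j (rbeta M j v) = rbeta N j (f (j+2) v)))"

definition hom_injective :: "nat \<Rightarrow> ('k::field) rep \<Rightarrow> (nat \<Rightarrow> 'k vec \<Rightarrow> 'k vec) \<Rightarrow> bool" where
  "hom_injective t M f \<longleftrightarrow> (\<forall>i\<in>{1..t}. inj_on (f i) (space (rdim M i)))"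

definition hom_surjective :: "nat \<Rightarrow> ('k::field) rep \<Rightarrow> 'k rep \<Rightarrow> (nat \<Rightarrow> 'k vec \<Rightarrow> 'k vec) \<Rightarrow> bool" where
  "hom_surjective t M N f \<longleftrightarrow> (\<forall>i\<in>{1..t}. f i ` space (rdim M i) = space (rdim N i))"

definition exact_at :: "nat \<Rightarrow> ('k::field) rep \<Rightarrow> 'k rep \<Rightarrow>
    (nat \<Rightarrow> 'k vec \<Rightarrow> 'k vec) \<Rightarrow> (nat \<Rightarrow> 'k vec \<Rightarrow> 'k vec) \<Rightarrow> bool" where
  "exact_at t L M f g \<longleftrightarrow>
     (\<forall>i\<in>{1..t}. {v \<in> space (rdim M i). g i v = (\<lambda>_. 0)} = f i ` space (rdim L i))"

definition vleft :: "nat \<Rightarrow> ('k::zero) vec \<Rightarrow> 'k vec" where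
  "vleft m w = (\<lambda>h. if 1 \<le> h \<and> h \<le> m then w h else 0)"
definition vright :: "nat \<Rightarrow> ('k::zero) vec \<Rightarrow> 'k vec" where
  "vright m w = (\<lambda>h. if 1 \<le> h then w (h + m) else 0)"
definition vconcat :: "nat \<Rightarrow> ('k::zero) vec \<Rightarrow> 'k vec \<Rightarrow> 'k vec" where
  "vconcat m u v = (\<lambda>h. if h = 0 then 0 else if h \<le> m then u h else v (h - m))"

definition dsum :: "('k::zero) rep \<Rightarrow> 'k rep \<Rightarrow> 'k rep" where
  "dsum M N = \<lparr> rdim = (\<lambda>i. rdim M i + rdim N i),
     ralpha = (\<lambda>i w. vconcat (rdim M (i+1))
                 (ralpha M i (vleft (rdim M i) w)) (ralpha N i (vright (rdim M i) w))),
     rbeta = (\<lambda>j w. vconcat (rdim M j)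
                 (rbeta M j (vleft (rdim M (j+2)) w)) (rbeta N j (vright (rdim M (j+2)) w))) \<rparr>"

definition hom_pair :: "('k::zero) rep \<Rightarrow> (nat \<Rightarrow> 'k vec \<Rightarrow> 'k vec) \<Rightarrow> (nat \<Rightarrow> 'k vec \<Rightarrow> 'k vec)
     \<Rightarrow> nat \<Rightarrow> 'k vec \<Rightarrow> 'k vec" where
  "hom_pair M f g = (\<lambda>i v. vconcat (rdim M i) (f i v) (g i v))"

definition Delta :: "nat set \<Rightarrow> ('k::field) rep" where
  "Delta J = \<lparr> rdim = (\<lambda>i. card {j \<in> J. j \<le> i}),
     ralpha = (\<lambda>i v. v),
     rbeta = (\<lambda>j v. (\<lambda>h. if h = 0 then 0 else v (h + 1))) \<rparr>"

definition Proj :: "nat \<Rightarrow> ('k::field) rep" where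
  "Proj i = Delta {i'. 1 \<le> i' \<and> i' \<le> i \<and> i' mod 2 = i mod 2}"

definition alg_closed_type :: "'k::field itself \<Rightarrow> bool" where
  "alg_closed_type _ \<longleftrightarrow> (\<forall>p :: 'k poly. 0 < degree p \<longrightarrow> (\<exists>x. poly p x = 0))"

end

theory Submission
  imports Defs
begin


lemma space_zero: "v \<in> space n \<Longrightarrow> v 0 = 0" by (simp add: space_def)
lemma space_out: "v \<in> space n \<Longrightarrow> n < h \<Longrightarrow> v h = 0" by (simp add: space_def)
lemma spaceI: "v 0 = 0 \<Longrightarrow> (\<And>h. n < h \<Longrightarrow> v h = 0) \<Longrightarrow> v \<in> space n" by (auto simp: space_def)
lemma space_mono: "v \<in> space m \<Longrightarrow> m \<le> n \<Longrightarrow> v \<in> space n" by (auto simp: space_def)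

lemma card_le_step: "card {j \<in> S. j \<le> Suc i} = card {j \<in> S. j \<le> i} + (if Suc i \<in> S then 1 else 0)"
proof -
  have "{j \<in> S. j \<le> Suc i} = {j \<in> S. j \<le> i} \<union> (if Suc i \<in> S then {Suc i} else {})" by (auto simp: le_Suc_eq)
  moreover have "finite {j \<in> S. j \<le> i}" by (rule finite_subset[of _ "{..i}"]) auto
  ultimately show ?thesis by auto
qed

lemma card_le_0: "card {j \<in> S. j \<le> (0::nat)} = (if 0 \<in> S then 1 else 0)"
proof -
  have "{j \<in> S. j \<le> 0} = (if 0 \<in> S then {0} else {})" by auto
  then show ?thesis by simp
qed

lemma card_le_mono: "card {j \<in> S. j \<le> (i::nat)} \<le> card {j \<in> S. j \<le> Suc i}"
  by (simp add: card_le_step)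


lemma rdim_Delta[simp]: "rdim (Delta J :: 'k::field rep) i = card {j \<in> J. j \<le> i}"
  by (simp add: Delta_def)
lemma ralpha_Delta[simp]: "ralpha (Delta J :: 'k::field rep) i v = v"
  by (simp add: Delta_def)
lemma rbeta_Delta[simp]: "rbeta (Delta J :: 'k::field rep) i v = (\<lambda>h. if h = 0 then 0 else v (h + 1))"
  by (simp add: Delta_def)

lemma div2_step: "(Suc s) div 2 = s div 2 + (if odd s then 1 else 0)"
  by (cases "even s") (auto simp: odd_succ_div_two even_succ_div_two)

lemma card_Proj_set: "card {j \<in> {i'. 1 \<le> i' \<and> i' \<le> m \<and> i' mod 2 = m mod 2}. j \<le> i} = (min i m + m mod 2) div 2"
proof (induction i)
  case 0
  then show ?case by (simp add: card_le_0)
next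
  case (Suc i)
  show ?case
  proof (cases "Suc i \<le> m")
    case True
    then have "min (Suc i) m + m mod 2 = Suc (min i m + m mod 2)" by simp
    moreover have "odd (min i m + m mod 2) \<longleftrightarrow> Suc i mod 2 = m mod 2" using True by (simp add: min_def) presburger
    ultimately show ?thesis unfolding card_le_step Suc.IH using True by (simp only: div2_step) auto
  next
    case False
    then have "min (Suc i) m = m" "min i m = m" by auto
    then show ?thesis unfolding card_le_step Suc.IH using False by simp
  qed
qed

lemma rdim_Proj: "rdim (Proj m :: 'k::field rep) i = (min i m + m mod 2) div 2"
  by (simp only: Proj_def rdim_Delta card_Proj_set)
lemma ralpha_Proj[simp]: "ralpha (Proj m :: 'k::field rep) i v = v"
  by (simp add: Proj_def)
lemma rbeta_Proj[simp]: "rbeta (Proj m :: 'k::field rep) i v = (\<lambda>h. if h = 0 then 0 else v (h + 1))"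
  by (simp add: Proj_def)

lemma dsum_simps[simp]:
  "rdim (dsum M N) i = rdim M i + rdim N i"
  "ralpha (dsum M N) i w = vconcat (rdim M (i+1)) (ralpha M i (vleft (rdim M i) w)) (ralpha N i (vright (rdim M i) w))"
  "rbeta (dsum M N) j w = vconcat (rdim M j) (rbeta M j (vleft (rdim M (j+2)) w)) (rbeta N j (vright (rdim M (j+2)) w))"
  by (simp_all add: dsum_def)

lemma vleft_vconcat: assumes "u \<in> space m" shows "vleft m (vconcat m u w) = u"
proof (rule ext)
  fix x show "vleft m (vconcat m u w) x = u x" using assms by (cases "x = 0") (auto simp: vleft_def vconcat_def space_def)
qed
lemma vright_vconcat: assumes "w 0 = 0" shows "vright m (vconcat m u w) = w"
proof (rule ext)
  fix x show "vright m (vconcat m u w) x = w x" using assms by (cases "x = 0") (auto simp: vright_def vconcat_def)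
qed

lemma vconcat_add: fixes a b c d :: "nat \<Rightarrow> 'a::monoid_add" shows "vconcat m (\<lambda>h. a h + b h) (\<lambda>h. c h + d h) = (\<lambda>h. vconcat m a c h + vconcat m b d h)"
  by (rule ext) (simp add: vconcat_def)
lemma vconcat_mult: fixes a c :: "nat \<Rightarrow> 'a::mult_zero" shows "vconcat m (\<lambda>h. k * a h) (\<lambda>h. k * c h) = (\<lambda>h. k * vconcat m a c h)"
  by (rule ext) (simp add: vconcat_def)

lemma hom_pair_rep:
  fixes f g :: "nat \<Rightarrow> 'k::field vec \<Rightarrow> 'k vec"
  assumes f: "rep_hom t M N f" and g: "rep_hom t M N' g"
  shows "rep_hom t M (dsum N N') (hom_pair N f g)"
proof -
  have lin: "linear_on (rdim M i) (rdim N i + rdim N' i) (\<lambda>v. vconcat (rdim N i) (f i v) (g i v))"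
    if i: "i \<in> {1..t}" for i
  proof -
    have lf: "linear_on (rdim M i) (rdim N i) (f i)" and lg: "linear_on (rdim M i) (rdim N' i) (g i)"
      using f g i unfolding rep_hom_def by blast+
    show ?thesis unfolding linear_on_def
    proof (intro conjI ballI allI)
      fix v :: "'k vec" assume v: "v \<in> space (rdim M i)"
      have "f i v \<in> space (rdim N i)" "g i v \<in> space (rdim N' i)" using lf lg v unfolding linear_on_def by blast+
      then show "vconcat (rdim N i) (f i v) (g i v) \<in> space (rdim N i + rdim N' i)"
        unfolding space_def vconcat_def by auto
    next
      fix u v :: "'k vec" assume uv: "u \<in> space (rdim M i)" "v \<in> space (rdim M i)"
      have "f i (\<lambda>h. u h + v h) = (\<lambda>h. f i u h + f i v h)" "g i (\<lambda>h. u h + v h) = (\<lambda>h. g i u h + g i v h)"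
        using lf lg uv unfolding linear_on_def by blast+
      then show "vconcat (rdim N i) (f i (\<lambda>h. u h + v h)) (g i (\<lambda>h. u h + v h)) =
          (\<lambda>h. vconcat (rdim N i) (f i u) (g i u) h + vconcat (rdim N i) (f i v) (g i v) h)"
        by (simp only: vconcat_add)
    next
      fix c and v :: "'k vec" assume v: "v \<in> space (rdim M i)"
      have "f i (\<lambda>h. c * v h) = (\<lambda>h. c * f i v h)" "g i (\<lambda>h. c * v h) = (\<lambda>h. c * g i v h)"
        using lf lg v unfolding linear_on_def by blast+
      then show "vconcat (rdim N i) (f i (\<lambda>h. c * v h)) (g i (\<lambda>h. c * v h)) =
          (\<lambda>h. c * vconcat (rdim N i) (f i v) (g i v) h)"
        by (simp only: vconcat_mult)
    qed
  qed
  show ?thesis unfolding rep_hom_def hom_pair_def dsum_simps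
  proof (intro conjI ballI allI impI)
    fix i assume "i \<in> {1..t}" then show "linear_on (rdim M i) (rdim N i + rdim N' i) (\<lambda>v. vconcat (rdim N i) (f i v) (g i v))"
      by (rule lin)
  next
    fix i and v :: "'k vec" assume i: "1 \<le> i \<and> i + 1 \<le> t" and v: "v \<in> space (rdim M i)"
    have "i \<in> {1..t}" using i by simp
    then have s1: "f i v \<in> space (rdim N i)" and s2: "g i v \<in> space (rdim N' i)"
      using f g v unfolding rep_hom_def linear_on_def by blast+
    have e1: "vleft (rdim N i) (vconcat (rdim N i) (f i v) (g i v)) = f i v" by (rule vleft_vconcat[OF s1])
    have e2: "vright (rdim N i) (vconcat (rdim N i) (f i v) (g i v)) = g i v" by (rule vright_vconcat) (rule space_zero[OF s2])
    have e3: "f (i+1) (ralpha M i v) = ralpha N i (f i v)" "g (i+1) (ralpha M i v) = ralpha N' i (g i v)"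
      using f g i v unfolding rep_hom_def by blast+
    show "vconcat (rdim N (i + 1)) (f (i + 1) (ralpha M i v)) (g (i + 1) (ralpha M i v)) =
         vconcat (rdim N (i + 1)) (ralpha N i (vleft (rdim N i) (vconcat (rdim N i) (f i v) (g i v))))
          (ralpha N' i (vright (rdim N i) (vconcat (rdim N i) (f i v) (g i v))))"
      by (simp only: e1 e2 e3)
  next
    fix j and v :: "'k vec" assume j: "1 \<le> j \<and> j + 2 \<le> t" and v: "v \<in> space (rdim M (j+2))"
    have "j + 2 \<in> {1..t}" using j by simp
    then have s1: "f (j+2) v \<in> space (rdim N (j+2))" and s2: "g (j+2) v \<in> space (rdim N' (j+2))"
      using f g v unfolding rep_hom_def linear_on_def by blast+
    have e1: "vleft (rdim N (j+2)) (vconcat (rdim N (j+2)) (f (j+2) v) (g (j+2) v)) = f (j+2) v" by (rule vleft_vconcat[OF s1])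
    have e2: "vright (rdim N (j+2)) (vconcat (rdim N (j+2)) (f (j+2) v) (g (j+2) v)) = g (j+2) v" by (rule vright_vconcat) (rule space_zero[OF s2])
    have e3: "f j (rbeta M j v) = rbeta N j (f (j+2) v)" "g j (rbeta M j v) = rbeta N' j (g (j+2) v)"
      using f g j v unfolding rep_hom_def by blast+
    show "vconcat (rdim N j) (f j (rbeta M j v)) (g j (rbeta M j v)) =
         vconcat (rdim N j) (rbeta N j (vleft (rdim N (j + 2)) (vconcat (rdim N (j + 2)) (f (j + 2) v) (g (j + 2) v))))
          (rbeta N' j (vright (rdim N (j + 2)) (vconcat (rdim N (j + 2)) (f (j + 2) v) (g (j + 2) v))))"
      by (simp only: e1 e2 e3)
  qed
qed

lemma hom_const:
  fixes f :: "nat \<Rightarrow> 'k::field vec \<Rightarrow> 'k vec"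
  assumes f: "rep_hom t (Delta A :: 'k rep) (Delta B) f"
  shows "1 \<le> i \<Longrightarrow> i \<le> t \<Longrightarrow> v \<in> space (card {j \<in> A. j \<le> i}) \<Longrightarrow> f i v = f t v"
proof (induction "t - i" arbitrary: i)
  case 0
  then show ?case by simp
next
  case (Suc k)
  have al: "\<forall>i. 1 \<le> i \<and> i + 1 \<le> t \<longrightarrow> (\<forall>v\<in>space (rdim (Delta A :: 'k rep) i). f (i+1) (ralpha (Delta A :: 'k rep) i v) = ralpha (Delta B :: 'k rep) i (f i v))"
    using f unfolding rep_hom_def by blast
  have "i + 1 \<le> t" using Suc.hyps(2) by simp
  then have "f (i+1) (ralpha (Delta A :: 'k rep) i v) = ralpha (Delta B :: 'k rep) i (f i v)"
    using al Suc.prems by simp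
  then have e: "f (i+1) v = f i v" by simp
  have "v \<in> space (card {j \<in> A. j \<le> Suc i})" using Suc.prems(3) card_le_mono space_mono by blast
  then have "f (Suc i) v = f t v" using Suc by simp
  then show ?case using e by simp
qed

lemma hom_shift:
  fixes f :: "nat \<Rightarrow> 'k::field vec \<Rightarrow> 'k vec"
  assumes f: "rep_hom t (Delta A :: 'k rep) (Delta B) f" and t: "3 \<le> t"
    and c: "card {j \<in> A. j \<le> t - 2} = card {j \<in> A. j \<le> t}"
    and v: "v \<in> space (card {j \<in> A. j \<le> t})"
  shows "f t (\<lambda>h. if h = 0 then 0 else v (h+1)) = (\<lambda>h. if h = 0 then 0 else f t v (h+1))"
proof -
  have tt: "t - 2 + 2 = t" using t by simp
  have be: "\<forall>j. 1 \<le> j \<and> j + 2 \<le> t \<longrightarrow> (\<forall>v\<in>space (rdim (Delta A :: 'k rep) (j+2)).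
         f j (rbeta (Delta A :: 'k rep) j v) = rbeta (Delta B :: 'k rep) j (f (j+2) v))"
    using f unfolding rep_hom_def by blast
  have "1 \<le> t - 2 \<and> t - 2 + 2 \<le> t" using t by linarith
  then have "\<forall>v\<in>space (rdim (Delta A :: 'k rep) (t-2+2)). f (t-2) (rbeta (Delta A :: 'k rep) (t-2) v) = rbeta (Delta B :: 'k rep) (t-2) (f (t-2+2) v)"
    using be by blast
  then have e: "f (t-2) (\<lambda>h. if h = 0 then 0 else v (h+1)) = (\<lambda>h. if h = 0 then 0 else f t v (h+1))"
    unfolding tt using v by simp
  have "(\<lambda>h. if h = 0 then 0 else v (h+1)) \<in> space (card {j \<in> A. j \<le> t - 2})"
    using v c by (auto simp: space_def)
  then have "f (t-2) (\<lambda>h. if h = 0 then 0 else v (h+1)) = f t (\<lambda>h. if h = 0 then 0 else v (h+1))"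
    using hom_const[OF f] t by simp
  then show ?thesis using e by simp
qed

definition Gd :: "nat \<Rightarrow> 'k::zero vec \<Rightarrow> 'k vec" where
  "Gd \<delta> v = (\<lambda>h. if h = 0 then 0 else v (h + \<delta>))"

lemma Gd_shift: "Gd \<delta> (\<lambda>h. if h = 0 then 0 else v (h+1)) = (\<lambda>h. if h = 0 then 0 else Gd \<delta> v (h+1))"
  by (rule ext) (simp add: Gd_def)

lemma basis_shift: "1 \<le> h \<Longrightarrow> (\<lambda>x. if x = 0 then 0 else basis_vec (Suc h) (x+1)) = (basis_vec h :: 'k::{zero,one} vec)"
  by (rule ext) (auto simp: basis_vec_def)

lemma basis_space: "1 \<le> h \<Longrightarrow> h \<le> r \<Longrightarrow> basis_vec h \<in> space r"
  by (auto simp: basis_vec_def space_def)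

lemma basis_agree:
  fixes F :: "'k::field vec \<Rightarrow> 'k vec"
  assumes Fsh: "\<And>v. v \<in> space r \<Longrightarrow> F (\<lambda>h. if h = 0 then 0 else v (h+1)) = (\<lambda>h. if h = 0 then 0 else F v (h+1))"
  and top: "F (basis_vec r) = Gd \<delta> (basis_vec r)"
  shows "1 \<le> h \<Longrightarrow> h \<le> r \<Longrightarrow> F (basis_vec h) = Gd \<delta> (basis_vec h)"
proof (induction "r - h" arbitrary: h)
  case 0
  then show ?case using top by (metis diff_is_0_eq le_antisym)
next
  case (Suc k)
  have ih: "F (basis_vec (Suc h)) = Gd \<delta> (basis_vec (Suc h))"
    using Suc.hyps(1)[of "Suc h"] Suc.hyps(2) Suc.prems by simp
  have "Suc h \<le> r" using Suc.hyps(2) by linarith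
  then have bs: "basis_vec (Suc h) \<in> space r" using basis_space[of "Suc h" r] by simp
  have "F (basis_vec h) = F (\<lambda>x. if x = 0 then 0 else basis_vec (Suc h) (x+1))"
    by (subst basis_shift[OF Suc.prems(1)]) (rule refl)
  also have "\<dots> = (\<lambda>x. if x = 0 then 0 else F (basis_vec (Suc h)) (x+1))"
    by (rule Fsh[OF bs])
  also have "\<dots> = Gd \<delta> (\<lambda>x. if x = 0 then 0 else basis_vec (Suc h) (x+1))"
    unfolding ih Gd_shift ..
  also have "\<dots> = Gd \<delta> (basis_vec h)" by (subst basis_shift[OF Suc.prems(1)]) (rule refl)
  finally show ?case .
qed

lemma lin_ext:
  fixes F :: "'k::field vec \<Rightarrow> 'k vec"
  assumes lin: "linear_on r n F" and bas: "\<And>h. 1 \<le> h \<Longrightarrow> h \<le> r \<Longrightarrow> F (basis_vec h) = Gd \<delta> (basis_vec h)"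
  shows "v \<in> space r \<Longrightarrow> F v = Gd \<delta> v"
proof -
  have "\<forall>v. v \<in> space m \<longrightarrow> m \<le> r \<longrightarrow> F v = Gd \<delta> v" for m
  proof (induction m)
    case 0
    show ?case
    proof (intro allI impI)
      fix v :: "'k vec" assume v: "v \<in> space 0"
      then have v0: "v = (\<lambda>h. 0 * v h)" by (auto simp: space_def)
      have "v \<in> space r" using v space_mono by blast
      then have "F (\<lambda>h. 0 * v h) = (\<lambda>h. 0 * F v h)" using lin unfolding linear_on_def by blast
      then have "F v = (\<lambda>h. 0)" using v0 by simp
      moreover have "Gd \<delta> v = (\<lambda>h. 0)" using v by (auto simp: Gd_def space_def)
      ultimately show "F v = Gd \<delta> v" by simp
    qed
  next
    case (Suc m)
    show ?case
    proof (intro allI impI)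
      fix v :: "'k vec" assume v: "v \<in> space (Suc m)" and m: "Suc m \<le> r"
      define v' where "v' = v(Suc m := 0)"
      define c where "c = v (Suc m)"
      define e where "e = (\<lambda>h. c * basis_vec (Suc m) h)"
      have v'sp: "v' \<in> space m" using v by (auto simp: space_def v'_def)
      have v'r: "v' \<in> space r" using v'sp m space_mono by fastforce
      have br: "basis_vec (Suc m) \<in> space r" using m basis_space[of "Suc m" r] by simp
      have er: "e \<in> space r" using br by (auto simp: e_def space_def)
      have vv: "v = (\<lambda>h. v' h + e h)" by (rule ext) (auto simp: v'_def e_def c_def basis_vec_def)
      have "F v = (\<lambda>h. F v' h + F e h)" using lin v'r er unfolding vv linear_on_def by blast
      also have "F e = (\<lambda>h. c * F (basis_vec (Suc m)) h)" using lin br unfolding e_def linear_on_def by blast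
      also have "F v' = Gd \<delta> v'" using Suc.IH v'sp m by simp
      also have "F (basis_vec (Suc m)) = Gd \<delta> (basis_vec (Suc m))" using bas m by simp
      finally have "F v = (\<lambda>h. Gd \<delta> v' h + c * Gd \<delta> (basis_vec (Suc m)) h)" .
      also have "\<dots> = Gd \<delta> v" unfolding vv e_def by (rule ext) (simp add: Gd_def)
      finally show "F v = Gd \<delta> v" .
    qed
  qed
  then show "v \<in> space r \<Longrightarrow> F v = Gd \<delta> v" by blast
qed

lemma card_le_mono2: "i \<le> i' \<Longrightarrow> card {j \<in> S. j \<le> (i::nat)} \<le> card {j \<in> S. j \<le> i'}"
  by (rule card_mono) (auto intro: finite_subset[of _ "{..i'}"])

lemma vcv: "vconcat p (vleft q x) (vright q x) k = (if k = 0 then 0 else if k \<le> p then (if k \<le> q then x k else 0) else x (k - p + q))"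
  by (cases "k \<le> p") (auto simp: vconcat_def vleft_def vright_def)

lemma vcv_sh: "vconcat p (\<lambda>h. if h = 0 then 0 else vleft q x (h+1)) (\<lambda>h. if h = 0 then 0 else vright q x (h+1)) k =
   (if k = 0 then 0 else if k \<le> p then (if k + 1 \<le> q then x (k+1) else 0) else x (k - p + 1 + q))"
  by (cases "k \<le> p") (auto simp: vconcat_def vleft_def vright_def)

lemma vconcat_split: assumes "x 0 = 0" shows "vconcat p (vleft p x) (vright p x) = x"
proof (rule ext)
  fix k show "vconcat p (vleft p x) (vright p x) k = x k" using assms by (simp add: vcv)
qed

lemma Gd0: "v \<in> space n \<Longrightarrow> Gd 0 v = v"
  by (rule ext) (simp add: Gd_def space_def)

lemma determined:
  fixes f :: "nat \<Rightarrow> 'k::field vec \<Rightarrow> 'k vec"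
  assumes f: "rep_hom t (Delta A :: 'k rep) (Delta B) f" and t3: "3 \<le> t"
    and c: "card {j \<in> A. j \<le> t - 2} = card {j \<in> A. j \<le> t}"
    and top: "f t (basis_vec (card {j \<in> A. j \<le> t})) = Gd \<delta> (basis_vec (card {j \<in> A. j \<le> t}))"
    and i: "1 \<le> i" "i \<le> t" and v: "v \<in> space (card {j \<in> A. j \<le> i})"
  shows "f i v = Gd \<delta> v"
proof -
  have "f i v = f t v" using hom_const[OF f i v] .
  also have "f t v = Gd \<delta> v"
  proof (rule lin_ext)
    have "t \<in> {1..t}" using t3 by simp
    then show "linear_on (card {j \<in> A. j \<le> t}) (card {j \<in> B. j \<le> t}) (f t)"
      using f unfolding rep_hom_def by simp
    show "\<And>h. 1 \<le> h \<Longrightarrow> h \<le> card {j \<in> A. j \<le> t} \<Longrightarrow> f t (basis_vec h) = Gd \<delta> (basis_vec h)"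
      by (rule basis_agree[OF hom_shift[OF f t3 c] top])
    show "v \<in> space (card {j \<in> A. j \<le> t})"
      using v card_le_mono2[OF i(2)] space_mono by blast
  qed
  finally show ?thesis .
qed





lemma N1: assumes "3 \<le> (b::nat)" "b + 2 \<le> t" "b = 2*m + \<delta>" "\<delta> \<le> 1"
  shows "(min t (b-1) + (1 - \<delta>)) div 2 + \<delta> = (min t b + \<delta>) div 2"
    and "1 \<le> (min t (b-1) + (1-\<delta>)) div 2"
  using assms by (simp_all add: min_def; linarith)+

lemma N2: assumes "3 \<le> (b::nat)" "b + 2 \<le> t" "b = 2*m + \<delta>" "\<delta> \<le> 1"
  shows "(min i b + \<delta>) div 2 \<le> (min i (b-1) + (1-\<delta>)) div 2 + \<delta>"
    and "(min i b + \<delta>) div 2 \<le> (min t b + \<delta>) div 2"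
    and "(min i (b-1) + (1-\<delta>)) div 2 \<le> (min t (b-1) + (1-\<delta>)) div 2"
  using assms by (simp_all add: min_def; linarith)+

lemma N3: assumes "3 \<le> (b::nat)" "b + 2 \<le> t" "b = 2*m + \<delta>" "\<delta> \<le> 1" "c = 2*n + \<delta>" "b+2 \<le> c" "c \<le> t" "t \<le> c+1" "i \<le> t"
  shows "(min i c + \<delta>) div 2 = (min i b + \<delta>) div 2 + (i - b) div 2"
  using assms by (simp add: min_def; linarith)

lemma N4: assumes "0 < ((i::nat) - b) div 2" "b \<le> t"
  shows "(min i b + \<delta>) div 2 = (min t b + \<delta>) div 2"
  using assms by (simp add: min_def; linarith)

lemma N5: assumes "3 \<le> (b::nat)" "b = 2*m + \<delta>" "\<delta> \<le> 1"
  shows "(min (i+1) (b-1) + (1-\<delta>)) div 2 = (min i (b-1) + (1-\<delta>)) div 2 \<or>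
    ((min (i+1) (b-1) + (1-\<delta>)) div 2 = (min i (b-1) + (1-\<delta>)) div 2 + 1 \<and> (i - b) div 2 = 0)"
  using assms by (simp add: min_def; linarith)

lemma N6: assumes "3 \<le> (b::nat)" "b + 2 \<le> t" "b = 2*m + \<delta>" "\<delta> \<le> 1"
  shows "((min (j+2) (b-1) + (1-\<delta>)) div 2 = (min j (b-1) + (1-\<delta>)) div 2 \<and>
          (min j (b-1) + (1-\<delta>)) div 2 = (min t (b-1) + (1-\<delta>)) div 2) \<or>
    ((min (j+2) (b-1) + (1-\<delta>)) div 2 = (min j (b-1) + (1-\<delta>)) div 2 + 1 \<and> (j + 2 - b) div 2 = 0)"
  using assms by (simp add: min_def; linarith)

lemma N7: assumes "b + 2 \<le> (t::nat)"
  shows "(min (t-2) b + \<delta>) div 2 = (min t b + \<delta>) div 2"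
proof -
  have "min (t-2) b = b" "min t b = b" using assms by auto
  then show ?thesis by simp
qed


lemma mod2_eq: "(x::nat) = 2*k + e \<Longrightarrow> e \<le> 1 \<Longrightarrow> x mod 2 = e"
  by simp

lemma Gd_linear: assumes "q \<le> p + \<delta>" shows "linear_on q p (Gd \<delta> :: 'k::field vec \<Rightarrow> 'k vec)"
  unfolding linear_on_def
proof (intro conjI ballI allI)
  fix v :: "'k vec" assume v: "v \<in> space q"
  show "Gd \<delta> v \<in> space p" unfolding space_def mem_Collect_eq
  proof (intro allI impI)
    fix h assume "h = 0 \<or> p < h"
    then show "Gd \<delta> v h = 0"
    proof
      assume "p < h"
      then have "q < h + \<delta>" using assms by linarith
      then show ?thesis using v by (simp add: Gd_def space_out)
    qed (simp add: Gd_def)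
  qed
next
  fix u v :: "'k vec"
  show "Gd \<delta> (\<lambda>h. u h + v h) = (\<lambda>h. Gd \<delta> u h + Gd \<delta> v h)" by (rule ext) (simp add: Gd_def)
next
  fix c and v :: "'k vec"
  show "Gd \<delta> (\<lambda>h. c * v h) = (\<lambda>h. c * Gd \<delta> v h)" by (rule ext) (simp add: Gd_def)
qed

lemma main:
  fixes b t c m n \<delta> :: nat and J :: "nat set" and K :: "'k::field itself"
  assumes b3: "3 \<le> b" and bt: "b + 2 \<le> t" and bm: "b = 2*m + \<delta>" and d1: "\<delta> \<le> 1" and cn: "c = 2*n + \<delta>"
    and bc: "b + 2 \<le> c" and ct: "c \<le> t" and tc: "t \<le> c + 1"
    and dT: "\<And>i. i \<le> t \<Longrightarrow> card {j \<in> J. j \<le> i} = (min i (b-1) + (1-\<delta>)) div 2 + (i - b) div 2"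
  shows "let T = (Delta J :: 'k rep);
             Pb = (Proj b :: 'k rep); Pb1 = (Proj (b - 1) :: 'k rep); Pc = (Proj c :: 'k rep);
             r = rdim Pb t; r1 = rdim Pb1 t;
             good = (\<lambda>\<phi>1 \<phi>2. rep_hom t Pb Pb1 \<phi>1 \<and> rep_hom t Pb Pc \<phi>2 \<and>
                        \<phi>1 t (basis_vec r) = basis_vec r1 \<and> \<phi>2 t (basis_vec r) = basis_vec r)
         in (\<exists>\<phi>1 \<phi>2. good \<phi>1 \<phi>2) \<and>
            (\<forall>\<phi>1 \<phi>2. good \<phi>1 \<phi>2 \<longrightarrow>
               (let \<psi> = hom_pair Pb1 \<phi>1 \<phi>2 in
                 rep_hom t Pb (dsum Pb1 Pc) \<psi> \<and> hom_injective t Pb \<psi> \<and>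
                 (\<exists>g. rep_hom t (dsum Pb1 Pc) T g \<and> hom_surjective t (dsum Pb1 Pc) T g \<and>
                      exact_at t Pb (dsum Pb1 Pc) \<psi> g)))"
proof -
  define P where "P = (\<lambda>i. (min i (b-1) + (1-\<delta>)) div 2)"
  define Q where "Q = (\<lambda>i. (min i b + \<delta>) div 2)"
  define C where "C = (\<lambda>i. (min i c + \<delta>) div 2)"
  define R where "R = Q t"
  define R1 where "R1 = P t"
  have bmod: "b mod 2 = \<delta>" using mod2_eq[OF bm d1] .
  have "b - 1 = 2 * (m + \<delta> - 1) + (1 - \<delta>)" using bm d1 b3 by linarith
  then have b1mod: "(b - 1) mod 2 = 1 - \<delta>" using mod2_eq by simp
  have cmod: "c mod 2 = \<delta>" using mod2_eq[OF cn d1] .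
  have rP: "\<And>i. rdim (Proj (b-1) :: 'k rep) i = P i" by (simp only: rdim_Proj P_def b1mod)
  have rQ: "\<And>i. rdim (Proj b :: 'k rep) i = Q i" by (simp only: rdim_Proj Q_def bmod)
  have rC: "\<And>i. rdim (Proj c :: 'k rep) i = C i" by (simp only: rdim_Proj C_def cmod)
  have dT': "\<And>i. i \<le> t \<Longrightarrow> card {j \<in> J. j \<le> i} = P i + (i - b) div 2" using dT by (simp add: P_def)
  have f1: "R1 + \<delta> = R" "1 \<le> R1" using N1[OF b3 bt bm d1] by (simp_all add: R_def R1_def P_def Q_def)
  have f2: "\<And>i. Q i \<le> P i + \<delta>" "\<And>i. Q i \<le> R" "\<And>i. P i \<le> R1"
    using N2[OF b3 bt bm d1] by (simp_all add: R_def R1_def P_def Q_def)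
  have f3: "\<And>i. i \<le> t \<Longrightarrow> C i = Q i + (i - b) div 2"
    using N3[OF b3 bt bm d1 cn bc ct tc] by (simp add: C_def Q_def)
  have f4: "\<And>i. 0 < (i - b) div 2 \<Longrightarrow> Q i = R"
    using N4 bt by (simp add: R_def Q_def)
  have f5: "\<And>i. P (i+1) = P i \<or> (P (i+1) = P i + 1 \<and> (i - b) div 2 = 0)"
    using N5[OF b3 bm d1] by (simp add: P_def)
  have f6: "\<And>j. (P (j+2) = P j \<and> P j = R1) \<or> (P (j+2) = P j + 1 \<and> (j + 2 - b) div 2 = 0)"
    using N6[OF b3 bt bm d1] by (simp add: P_def R1_def)
  have f7: "Q (t-2) = R" using N7[OF bt] by (simp add: Q_def R_def)
  have QC: "\<And>i. i \<le> t \<Longrightarrow> Q i \<le> C i" using f3 by fastforce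
  have t3: "3 \<le> t" using b3 bt by linarith

  have h1: "rep_hom t (Proj b :: 'k rep) (Proj (b-1)) (\<lambda>i. Gd \<delta>)"
    unfolding rep_hom_def rP rQ ralpha_Proj rbeta_Proj
  proof (intro conjI ballI allI impI)
    fix i assume "i \<in> {1..t}"
    show "linear_on (Q i) (P i) (Gd \<delta>)" by (rule Gd_linear[OF f2(1)])
  next
    fix i and v :: "'k vec"
    show "Gd \<delta> v = Gd \<delta> v" ..
  next
    fix j and v :: "'k vec"
    show "Gd \<delta> (\<lambda>h. if h = 0 then 0 else v (h + 1)) = (\<lambda>h. if h = 0 then 0 else Gd \<delta> v (h + 1))"
      by (rule Gd_shift)
  qed
  have h2: "rep_hom t (Proj b :: 'k rep) (Proj c) (\<lambda>i v. v)"
    unfolding rep_hom_def rC rQ ralpha_Proj rbeta_Proj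
  proof (intro conjI ballI allI impI)
    fix i assume "i \<in> {1..t}"
    then have "Q i \<le> C i" using QC by simp
    then show "linear_on (Q i) (C i) (\<lambda>v. v)" unfolding linear_on_def using space_mono by blast
  qed simp_all
  have h3: "Gd \<delta> (basis_vec R) = (basis_vec R1 :: 'k vec)"
  proof (rule ext)
    fix h show "Gd \<delta> (basis_vec R) h = (basis_vec R1 :: 'k vec) h"
      using f1 by (auto simp: Gd_def basis_vec_def)
  qed
  have h4: "Gd 0 (basis_vec R) = (basis_vec R :: 'k vec)"
    by (rule Gd0[OF basis_space[of R R]]) (use f1 in simp_all)
  have E: "\<exists>\<phi>1 \<phi>2. rep_hom t (Proj b :: 'k rep) (Proj (b-1)) \<phi>1 \<and> rep_hom t (Proj b :: 'k rep) (Proj c) \<phi>2 \<and>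
             \<phi>1 t (basis_vec R) = basis_vec R1 \<and> \<phi>2 t (basis_vec R) = basis_vec R"
    using h1 h2 h3 by blast

  have U: "rep_hom t (Proj b :: 'k rep) (dsum (Proj (b-1)) (Proj c)) (hom_pair (Proj (b-1)) \<phi>1 \<phi>2) \<and>
           hom_injective t (Proj b :: 'k rep) (hom_pair (Proj (b-1)) \<phi>1 \<phi>2) \<and>
           (\<exists>g. rep_hom t (dsum (Proj (b-1)) (Proj c)) (Delta J :: 'k rep) g \<and>
                hom_surjective t (dsum (Proj (b-1)) (Proj c)) (Delta J :: 'k rep) g \<and>
                exact_at t (Proj b) (dsum (Proj (b-1)) (Proj c)) (hom_pair (Proj (b-1)) \<phi>1 \<phi>2) g)"
    if g1: "rep_hom t (Proj b :: 'k rep) (Proj (b-1)) \<phi>1" and g2: "rep_hom t (Proj b :: 'k rep) (Proj c) \<phi>2"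
      and g3: "\<phi>1 t (basis_vec R) = basis_vec R1" and g4: "\<phi>2 t (basis_vec R) = basis_vec R"
    for \<phi>1 \<phi>2
  proof -
    define Sb where "Sb = {i'. 1 \<le> i' \<and> i' \<le> b \<and> i' mod 2 = b mod 2}"
    have cQ: "\<And>i. card {j \<in> Sb. j \<le> i} = Q i" unfolding Sb_def card_Proj_set by (simp add: Q_def bmod)
    have Pb: "(Proj b :: 'k rep) = Delta Sb" by (simp add: Proj_def Sb_def)
    have ct2: "card {j \<in> Sb. j \<le> t - 2} = card {j \<in> Sb. j \<le> t}" using f7 cQ R_def by simp
    have g1': "rep_hom t (Delta Sb :: 'k rep) (Delta {i'. 1 \<le> i' \<and> i' \<le> b - 1 \<and> i' mod 2 = (b - 1) mod 2}) \<phi>1"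
      using g1 unfolding Pb by (simp only: Proj_def)
    have g2': "rep_hom t (Delta Sb :: 'k rep) (Delta {i'. 1 \<le> i' \<and> i' \<le> c \<and> i' mod 2 = c mod 2}) \<phi>2"
      using g2 unfolding Pb by (simp only: Proj_def)
    have top1: "\<phi>1 t (basis_vec (card {j \<in> Sb. j \<le> t})) = Gd \<delta> (basis_vec (card {j \<in> Sb. j \<le> t}))"
      unfolding cQ R_def[symmetric] g3 h3 ..
    have top2: "\<phi>2 t (basis_vec (card {j \<in> Sb. j \<le> t})) = Gd 0 (basis_vec (card {j \<in> Sb. j \<le> t}))"
      unfolding cQ R_def[symmetric] g4 h4 ..
    have ph1: "\<And>i v. 1 \<le> i \<Longrightarrow> i \<le> t \<Longrightarrow> v \<in> space (Q i) \<Longrightarrow> \<phi>1 i v = Gd \<delta> v"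
    proof -
      fix i and v :: "'k vec" assume a: "1 \<le> i" "i \<le> t" "v \<in> space (Q i)"
      show "\<phi>1 i v = Gd \<delta> v" by (rule determined[OF g1' t3 ct2 top1 a(1,2)]) (use a(3) cQ in simp)
    qed
    have ph2: "\<And>i v. 1 \<le> i \<Longrightarrow> i \<le> t \<Longrightarrow> v \<in> space (Q i) \<Longrightarrow> \<phi>2 i v = v"
    proof -
      fix i and v :: "'k vec" assume a: "1 \<le> i" "i \<le> t" "v \<in> space (Q i)"
      have "\<phi>2 i v = Gd 0 v" by (rule determined[OF g2' t3 ct2 top2 a(1,2)]) (use a(3) cQ in simp)
      then show "\<phi>2 i v = v" using Gd0 a(3) by simp
    qed
    have rpsi: "rep_hom t (Proj b :: 'k rep) (dsum (Proj (b-1)) (Proj c)) (hom_pair (Proj (b-1)) \<phi>1 \<phi>2)"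
      by (rule hom_pair_rep[OF g1 g2])
    have psiv: "\<And>i v. 1 \<le> i \<Longrightarrow> i \<le> t \<Longrightarrow> v \<in> space (Q i) \<Longrightarrow>
        hom_pair (Proj (b-1)) \<phi>1 \<phi>2 i v = vconcat (P i) (Gd \<delta> v) v"
      unfolding hom_pair_def rP using ph1 ph2 by simp
    have inj: "hom_injective t (Proj b :: 'k rep) (hom_pair (Proj (b-1)) \<phi>1 \<phi>2)"
      unfolding hom_injective_def rQ
    proof
      fix i assume i: "i \<in> {1..t}"
      show "inj_on (hom_pair (Proj (b-1)) \<phi>1 \<phi>2 i) (space (Q i))"
      proof (rule inj_onI)
        fix u v :: "'k vec" assume u: "u \<in> space (Q i)" and v: "v \<in> space (Q i)"
          and e: "hom_pair (Proj (b-1)) \<phi>1 \<phi>2 i u = hom_pair (Proj (b-1)) \<phi>1 \<phi>2 i v"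
        have "vconcat (P i) (Gd \<delta> u) u = vconcat (P i) (Gd \<delta> v) v" using e psiv i u v by simp
        then have "vright (P i) (vconcat (P i) (Gd \<delta> u) u) = vright (P i) (vconcat (P i) (Gd \<delta> v) v)" by simp
        then show "u = v" using vright_vconcat space_zero u v by metis
      qed
    qed
    define g where "g = (\<lambda>i (x::'k vec) h. if h = 0 then 0 else if h \<le> P i then x (P i + h + \<delta>) - x h else x (h + R))"
    have gv0: "\<And>i x. g i x 0 = 0" by (simp add: g_def)
    have gvlo: "\<And>i x h. 1 \<le> h \<Longrightarrow> h \<le> P i \<Longrightarrow> g i x h = x (P i + h + \<delta>) - x h" by (simp add: g_def)
    have gvhi: "\<And>i x h. P i < h \<Longrightarrow> g i x h = x (h + R)" by (simp add: g_def)
    have vlo: "\<And>p q (x::'k vec) k. 1 \<le> k \<Longrightarrow> k \<le> p \<Longrightarrow> vconcat p (vleft q x) (vright q x) k = (if k \<le> q then x k else 0)"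
      by (simp add: vcv)
    have vhi: "\<And>p q (x::'k vec) k. p < k \<Longrightarrow> vconcat p (vleft q x) (vright q x) k = x (k - p + q)"
      by (simp add: vcv)
    have slo: "\<And>p q (x::'k vec) k. 1 \<le> k \<Longrightarrow> k \<le> p \<Longrightarrow>
       vconcat p (\<lambda>h. if h = 0 then 0 else vleft q x (h+1)) (\<lambda>h. if h = 0 then 0 else vright q x (h+1)) k = (if k + 1 \<le> q then x (k+1) else 0)"
      by (simp add: vcv_sh)
    have shi: "\<And>p q (x::'k vec) k. p < k \<Longrightarrow>
       vconcat p (\<lambda>h. if h = 0 then 0 else vleft q x (h+1)) (\<lambda>h. if h = 0 then 0 else vright q x (h+1)) k = x (k - p + 1 + q)"
      by (simp add: vcv_sh)

    have gl: "\<And>i. 1 \<le> i \<Longrightarrow> i \<le> t \<Longrightarrow> linear_on (P i + C i) (P i + (i - b) div 2) (g i)"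
    proof -
      fix i assume i: "1 \<le> i" "i \<le> t"
      show "linear_on (P i + C i) (P i + (i - b) div 2) (g i)" unfolding linear_on_def
      proof (intro conjI ballI allI)
        fix x :: "'k vec" assume x: "x \<in> space (P i + C i)"
        show "g i x \<in> space (P i + (i - b) div 2)" unfolding space_def mem_Collect_eq
        proof (intro allI impI)
          fix h assume "h = 0 \<or> P i + (i - b) div 2 < h"
          then show "g i x h = 0"
          proof
            assume h: "P i + (i - b) div 2 < h"
            have "P i + C i < h + R" using h f3[OF i(2)] f2(2)[of i] by linarith
            then have "x (h + R) = 0" using x space_out by blast
            moreover have "P i < h" using h by linarith
            ultimately show ?thesis using gvhi by simp
          qed (simp add: gv0)
        qed
      next
        fix u v :: "'k vec"
        show "g i (\<lambda>h. u h + v h) = (\<lambda>h. g i u h + g i v h)" by (rule ext) (simp add: g_def algebra_simps)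
      next
        fix c and v :: "'k vec"
        show "g i (\<lambda>h. c * v h) = (\<lambda>h. c * g i v h)" by (rule ext) (simp add: g_def algebra_simps)
      qed
    qed

    have ga: "\<And>i x. 1 \<le> i \<Longrightarrow> i + 1 \<le> t \<Longrightarrow> x \<in> space (P i + C i) \<Longrightarrow>
        g (i+1) (vconcat (P (i+1)) (vleft (P i) x) (vright (P i) x)) = g i x"
    proof -
      fix i and x :: "'k vec" assume i: "1 \<le> i" "i + 1 \<le> t" and x: "x \<in> space (P i + C i)"
      have x0: "x 0 = 0" using x space_zero by blast
      consider (eq) "P (i+1) = P i" | (inc) "P (i+1) = P i + 1" "(i - b) div 2 = 0" using f5[of i] by auto
      then show "g (i+1) (vconcat (P (i+1)) (vleft (P i) x) (vright (P i) x)) = g i x"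
      proof cases
        case eq
        have "vconcat (P (i+1)) (vleft (P i) x) (vright (P i) x) = x" unfolding eq using vconcat_split x0 by blast
        moreover have "g (i+1) x = g i x" by (simp only: g_def eq)
        ultimately show ?thesis by simp
      next
        case inc
        have Ci: "C i = Q i" using f3[of i] i inc(2) by simp
        have xs: "\<And>k. P i + Q i < k \<Longrightarrow> x k = 0" using x Ci space_out by metis
        define y where "y = vconcat (P (i+1)) (vleft (P i) x) (vright (P i) x)"
        show ?thesis unfolding y_def[symmetric]
        proof (rule ext)
          fix h
          consider "h = 0" | "1 \<le> h" "h \<le> P i" | "h = P i + 1" | "P i + 1 < h" by linarith
          then show "g (i+1) y h = g i x h"
          proof cases
            case 1 then show ?thesis by (simp add: gv0)
          next
            case 2
            have "g (i+1) y h = y (P (i+1) + h + \<delta>) - y h" using 2 inc(1) by (intro gvlo) simp_all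
            also have "y (P (i+1) + h + \<delta>) = x (P (i+1) + h + \<delta> - P (i+1) + P i)"
              unfolding y_def using 2 by (intro vhi) simp
            also have "P (i+1) + h + \<delta> - P (i+1) + P i = P i + h + \<delta>" by simp
            also have "y h = x h" unfolding y_def using 2 inc(1) vlo by simp
            also have "x (P i + h + \<delta>) - x h = g i x h" using 2 by (intro gvlo[symmetric]) simp_all
            finally show ?thesis .
          next
            case 3
            have "g (i+1) y h = y (P (i+1) + h + \<delta>) - y h" using 3 inc(1) by (intro gvlo) simp_all
            also have "y (P (i+1) + h + \<delta>) = x (P (i+1) + h + \<delta> - P (i+1) + P i)"
              unfolding y_def using 3 by (intro vhi) simp
            also have "\<dots> = 0" using 3 f2(1)[of i] by (intro xs) linarith
            also have "y h = 0" unfolding y_def using 3 inc(1) vlo by simp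
            also have "(0::'k) - 0 = x (h + R)" using 3 f2(2)[of i] xs[of "h + R"] by simp
            also have "x (h + R) = g i x h" using 3 by (intro gvhi[symmetric]) simp
            finally show ?thesis .
          next
            case 4
            have "g (i+1) y h = y (h + R)" using 4 inc(1) by (intro gvhi) simp
            also have "y (h + R) = x (h + R - P (i+1) + P i)" unfolding y_def using 4 inc(1) by (intro vhi) simp
            also have "\<dots> = 0" using 4 inc(1) f2(2)[of i] by (intro xs) linarith
            also have "(0::'k) = x (h + R)" using 4 f2(2)[of i] xs[of "h + R"] by simp
            also have "x (h + R) = g i x h" using 4 by (intro gvhi[symmetric]) simp
            finally show ?thesis .
          qed
        qed
      qed
    qed

    have gb: "\<And>j x. 1 \<le> j \<Longrightarrow> j + 2 \<le> t \<Longrightarrow> x \<in> space (P (j+2) + C (j+2)) \<Longrightarrow>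
        g j (vconcat (P j) (\<lambda>h. if h = 0 then 0 else vleft (P (j+2)) x (h+1)) (\<lambda>h. if h = 0 then 0 else vright (P (j+2)) x (h+1)))
        = (\<lambda>h. if h = 0 then 0 else g (j+2) x (h+1))"
    proof -
      fix j and x :: "'k vec" assume j: "1 \<le> j" "j + 2 \<le> t" and x: "x \<in> space (P (j+2) + C (j+2))"
      define y where "y = vconcat (P j) (\<lambda>h. if h = 0 then 0 else vleft (P (j+2)) x (h+1)) (\<lambda>h. if h = 0 then 0 else vright (P (j+2)) x (h+1))"
      consider (eq) "P (j+2) = P j" "P j = R1" | (inc) "P (j+2) = P j + 1" "(j + 2 - b) div 2 = 0" using f6[of j] by auto
      then show "g j y = (\<lambda>h. if h = 0 then 0 else g (j+2) x (h+1))" unfolding y_def[symmetric]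
      proof cases
        case eq
        show ?thesis
        proof (rule ext)
          fix h
          consider "h = 0" | "1 \<le> h" "h + 1 \<le> P j" | "h = P j" "1 \<le> h" | "P j < h" by linarith
          then show "g j y h = (if h = 0 then 0 else g (j+2) x (h+1))"
          proof cases
            case 1 then show ?thesis by (simp add: gv0)
          next
            case 2
            have "g j y h = y (P j + h + \<delta>) - y h" using 2 by (intro gvlo) simp_all
            also have "y (P j + h + \<delta>) = x (P j + h + \<delta> - P j + 1 + P (j+2))"
              unfolding y_def using 2 by (intro shi) simp
            also have "P j + h + \<delta> - P j + 1 + P (j+2) = P (j+2) + (h+1) + \<delta>" using eq by simp
            also have "y h = x (h+1)" unfolding y_def using 2 eq slo by simp
            also have "x (P (j+2) + (h+1) + \<delta>) - x (h+1) = g (j+2) x (h+1)" using 2 eq by (intro gvlo[symmetric]) simp_all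
            finally show ?thesis using 2 by simp
          next
            case 3
            have "g j y h = y (P j + h + \<delta>) - y h" using 3 by (intro gvlo) simp_all
            also have "y (P j + h + \<delta>) = x (P j + h + \<delta> - P j + 1 + P (j+2))"
              unfolding y_def using 3 by (intro shi) simp
            also have "P j + h + \<delta> - P j + 1 + P (j+2) = h + 1 + R" using 3 eq f1(1) by simp
            also have "y h = 0" unfolding y_def using 3 eq slo by simp
            also have "x (h + 1 + R) - 0 = g (j+2) x (h+1)" using 3 eq by (simp add: gvhi)
            finally show ?thesis using 3 by simp
          next
            case 4
            have "g j y h = y (h + R)" using 4 by (intro gvhi) simp
            also have "y (h + R) = x (h + R - P j + 1 + P (j+2))" unfolding y_def using 4 by (intro shi) simp
            also have "h + R - P j + 1 + P (j+2) = h + 1 + R" using 4 eq by simp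
            also have "x (h + 1 + R) = g (j+2) x (h+1)" using 4 eq by (simp add: gvhi)
            finally show ?thesis using 4 by simp
          qed
        qed
      next
        case inc
        have Cj: "C (j+2) = Q (j+2)" using f3[of "j+2"] j inc(2) by simp
        have xs: "\<And>k. P j + 1 + Q (j+2) < k \<Longrightarrow> x k = 0" using x Cj inc(1) space_out by metis
        show ?thesis
        proof (rule ext)
          fix h
          consider "h = 0" | "1 \<le> h" "h \<le> P j" | "P j < h" by linarith
          then show "g j y h = (if h = 0 then 0 else g (j+2) x (h+1))"
          proof cases
            case 1 then show ?thesis by (simp add: gv0)
          next
            case 2
            have "g j y h = y (P j + h + \<delta>) - y h" using 2 by (intro gvlo) simp_all
            also have "y (P j + h + \<delta>) = x (P j + h + \<delta> - P j + 1 + P (j+2))"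
              unfolding y_def using 2 by (intro shi) simp
            also have "P j + h + \<delta> - P j + 1 + P (j+2) = P (j+2) + (h+1) + \<delta>" using inc by simp
            also have "y h = x (h+1)" unfolding y_def using 2 inc slo by simp
            also have "x (P (j+2) + (h+1) + \<delta>) - x (h+1) = g (j+2) x (h+1)" using 2 inc by (intro gvlo[symmetric]) simp_all
            finally show ?thesis using 2 by simp
          next
            case 3
            have "g j y h = y (h + R)" using 3 by (intro gvhi) simp
            also have "y (h + R) = x (h + R - P j + 1 + P (j+2))" unfolding y_def using 3 by (intro shi) simp
            also have "\<dots> = 0" using 3 inc f2(2)[of "j+2"] by (intro xs) linarith
            also have "(0::'k) = x (h + 1 + R)" using 3 f2(2)[of "j+2"] xs[of "h + 1 + R"] by simp
            also have "x (h + 1 + R) = g (j+2) x (h+1)" using 3 inc by (simp add: gvhi)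
            finally show ?thesis using 3 by simp
          qed
        qed
      qed
    qed

    have grep: "rep_hom t (dsum (Proj (b-1)) (Proj c)) (Delta J :: 'k rep) g"
      unfolding rep_hom_def dsum_simps rP rC ralpha_Proj rbeta_Proj ralpha_Delta rbeta_Delta rdim_Delta
    proof (intro conjI ballI allI impI)
      fix i assume "i \<in> {1..t}"
      then show "linear_on (P i + C i) (card {j \<in> J. j \<le> i}) (g i)" using gl dT' by simp
    next
      fix i and x :: "'k vec" assume "1 \<le> i \<and> i + 1 \<le> t" "x \<in> space (P i + C i)"
      then show "g (i + 1) (vconcat (P (i + 1)) (vleft (P i) x) (vright (P i) x)) = g i x" using ga by blast
    next
      fix j and x :: "'k vec" assume "1 \<le> j \<and> j + 2 \<le> t" "x \<in> space (P (j + 2) + C (j + 2))"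
      then show "g j (vconcat (P j) (\<lambda>h. if h = 0 then 0 else vleft (P (j + 2)) x (h + 1))
            (\<lambda>h. if h = 0 then 0 else vright (P (j + 2)) x (h + 1))) =
         (\<lambda>h. if h = 0 then 0 else g (j + 2) x (h + 1))" using gb by blast
    qed

    have gsurj: "hom_surjective t (dsum (Proj (b-1)) (Proj c)) (Delta J :: 'k rep) g"
      unfolding hom_surjective_def dsum_simps rP rC rdim_Delta
    proof
      fix i assume "i \<in> {1..t}"
      then have i: "1 \<le> i" "i \<le> t" by auto
      show "g i ` space (P i + C i) = space (card {j \<in> J. j \<le> i})" unfolding dT'[OF i(2)]
      proof
        show "g i ` space (P i + C i) \<subseteq> space (P i + (i - b) div 2)"
          using gl[OF i] unfolding linear_on_def by blast
      next
        show "space (P i + (i - b) div 2) \<subseteq> g i ` space (P i + C i)"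
        proof
          fix z :: "'k vec" assume z: "z \<in> space (P i + (i - b) div 2)"
          define x where "x = vconcat (P i) (\<lambda>h. - z h) (\<lambda>k. if R < k then z (k - R + P i) else 0)"
          have xsp: "x \<in> space (P i + C i)"
          proof (rule spaceI)
            show "x 0 = 0" by (simp add: x_def vconcat_def)
          next
            fix k assume k: "P i + C i < k"
            show "x k = 0"
            proof (cases "R < k - P i")
              case True
              have "P i + (i - b) div 2 < k - P i - R + P i"
              proof (cases "(i - b) div 2 = 0")
                case True then show ?thesis using k \<open>R < k - P i\<close> by linarith
              next
                case False
                then have "Q i = R" using f4 by simp
                then show ?thesis using k f3[OF i(2)] by linarith
              qed
              then have "z (k - P i - R + P i) = 0" using z space_out by blast
              then show ?thesis using k True by (simp add: x_def vconcat_def)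
            next
              case False
              then show ?thesis using k by (simp add: x_def vconcat_def)
            qed
          qed
          have "g i x = z"
          proof (rule ext)
            fix h
            consider "h = 0" | "1 \<le> h" "h \<le> P i" | "P i < h" by linarith
            then show "g i x h = z h"
            proof cases
              case 1 then show ?thesis using z space_zero gv0 by metis
            next
              case 2
              have "h + \<delta> \<le> R" using 2 f2(3)[of i] f1(1) by linarith
              then have "x (P i + h + \<delta>) = 0" using 2 by (simp add: x_def vconcat_def)
              moreover have "x h = - z h" using 2 by (simp add: x_def vconcat_def)
              ultimately show ?thesis using 2 gvlo by simp
            next
              case 3
              have "x (h + R) = z (h + R - P i - R + P i)" using 3 by (simp add: x_def vconcat_def)
              also have "h + R - P i - R + P i = h" using 3 by simp
              finally show ?thesis using 3 gvhi by simp
            qed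
          qed
          then show "z \<in> g i ` space (P i + C i)" using xsp by blast
        qed
      qed
    qed

    have gex: "exact_at t (Proj b :: 'k rep) (dsum (Proj (b-1)) (Proj c)) (hom_pair (Proj (b-1)) \<phi>1 \<phi>2) g"
      unfolding exact_at_def dsum_simps rP rC rQ
    proof
      fix i assume "i \<in> {1..t}"
      then have i: "1 \<le> i" "i \<le> t" by auto
      show "{x \<in> space (P i + C i). g i x = (\<lambda>_. 0)} = hom_pair (Proj (b - 1)) \<phi>1 \<phi>2 i ` space (Q i)"
      proof
        show "hom_pair (Proj (b - 1)) \<phi>1 \<phi>2 i ` space (Q i) \<subseteq> {x \<in> space (P i + C i). g i x = (\<lambda>_. 0)}"
        proof
          fix x assume "x \<in> hom_pair (Proj (b - 1)) \<phi>1 \<phi>2 i ` space (Q i)"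
          then obtain v where v: "v \<in> space (Q i)" and xv: "x = vconcat (P i) (Gd \<delta> v) v"
            using psiv[OF i] by blast
          have xsp: "x \<in> space (P i + C i)"
          proof (rule spaceI)
            show "x 0 = 0" by (simp add: xv vconcat_def)
          next
            fix k assume k: "P i + C i < k"
            have "Q i < k - P i" using k QC[OF i(2)] by linarith
            then have "v (k - P i) = 0" using v space_out by blast
            then show "x k = 0" using k by (simp add: xv vconcat_def)
          qed
          have "g i x = (\<lambda>_. 0)"
          proof (rule ext)
            fix h
            consider "h = 0" | "1 \<le> h" "h \<le> P i" | "P i < h" by linarith
            then show "g i x h = 0"
            proof cases
              case 1 then show ?thesis by (simp add: gv0)
            next
              case 2
              have "x (P i + h + \<delta>) = v (h + \<delta>)" using 2 by (simp add: xv vconcat_def)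
              moreover have "x h = v (h + \<delta>)" using 2 by (simp add: xv vconcat_def Gd_def)
              ultimately show ?thesis using 2 gvlo by simp
            next
              case 3
              have "Q i < h + R - P i" using 3 f2(2)[of i] by linarith
              then have "v (h + R - P i) = 0" using v space_out by blast
              then have "x (h + R) = 0" using 3 by (simp add: xv vconcat_def)
              then show ?thesis using 3 gvhi by simp
            qed
          qed
          then show "x \<in> {x \<in> space (P i + C i). g i x = (\<lambda>_. 0)}" using xsp by blast
        qed
      next
        show "{x \<in> space (P i + C i). g i x = (\<lambda>_. 0)} \<subseteq> hom_pair (Proj (b - 1)) \<phi>1 \<phi>2 i ` space (Q i)"
        proof
          fix x :: "'k vec" assume "x \<in> {x \<in> space (P i + C i). g i x = (\<lambda>_. 0)}"
          then have x: "x \<in> space (P i + C i)" and gx: "g i x = (\<lambda>_. 0)" by auto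
          have gxh: "\<And>h. g i x h = 0" using gx by simp
          define v where "v = vright (P i) x"
          have vsp: "v \<in> space (Q i)"
          proof (rule spaceI)
            show "v 0 = 0" by (simp add: v_def vright_def)
          next
            fix k assume k: "Q i < k"
            show "v k = 0"
            proof (cases "(i - b) div 2 = 0")
              case True
              then have "P i + C i < k + P i" using k f3[OF i(2)] by linarith
              then have "x (k + P i) = 0" using space_out[OF x] by blast
              then show ?thesis using k by (simp add: v_def vright_def)
            next
              case False
              then have QR: "Q i = R" using f4 by simp
              have "P i < k + P i - R" using k QR by linarith
              then have "g i x (k + P i - R) = x (k + P i - R + R)" using gvhi by blast
              moreover have "k + P i - R + R = k + P i" using k QR by linarith
              ultimately have "x (k + P i) = 0" using gxh by simp
              then show ?thesis using k by (simp add: v_def vright_def)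
            qed
          qed
          have "x = vconcat (P i) (Gd \<delta> v) v"
          proof (rule ext)
            fix h
            consider "h = 0" | "1 \<le> h" "h \<le> P i" | "P i < h" by linarith
            then show "x h = vconcat (P i) (Gd \<delta> v) v h"
            proof cases
              case 1 then show ?thesis using x space_zero by (simp add: vconcat_def)
            next
              case 2
              have "x (P i + h + \<delta>) - x h = 0" using gvlo[OF 2] gxh by metis
              then have "x h = x (P i + h + \<delta>)" by simp
              moreover have "Gd \<delta> v h = x (h + \<delta> + P i)" using 2 by (simp add: Gd_def v_def vright_def)
              ultimately show ?thesis using 2 by (simp add: vconcat_def add.commute add.left_commute)
            next
              case 3
              then show ?thesis by (simp add: vconcat_def v_def vright_def)
            qed
          qed
          then have "x = hom_pair (Proj (b - 1)) \<phi>1 \<phi>2 i v" using psiv[OF i vsp] by simp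
          then show "x \<in> hom_pair (Proj (b - 1)) \<phi>1 \<phi>2 i ` space (Q i)" using vsp by blast
        qed
      qed
    qed
    show ?thesis using rpsi inj grep gsurj gex by blast
  qed
  show ?thesis unfolding Let_def rQ rP R_def[symmetric] R1_def[symmetric]
    using E U by blast
qed


lemma parity_step: "b \<le> (i::nat) \<Longrightarrow> odd (i - b) \<longleftrightarrow> Suc i mod 2 = b mod 2"
  by presburger

lemma card_tail: "i \<le> t \<Longrightarrow> card {j \<in> {j. b+2 \<le> j \<and> j \<le> t \<and> j mod 2 = b mod 2}. j \<le> i} = (i - b) div 2"
proof (induction i)
  case 0
  have "{j \<in> {j. b+2 \<le> j \<and> j \<le> t \<and> j mod 2 = b mod 2}. j \<le> 0} = {}" by auto
  then show ?case by simp
next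
  case (Suc i)
  have IH: "card {j \<in> {j. b+2 \<le> j \<and> j \<le> t \<and> j mod 2 = b mod 2}. j \<le> i} = (i - b) div 2"
    using Suc by simp
  show ?case
  proof (cases "b \<le> i")
    case True
    have "Suc i - b = Suc (i - b)" using True by simp
    then have e: "(Suc i - b) div 2 = (i - b) div 2 + (if odd (i - b) then 1 else 0)" using div2_step by simp
    have "Suc i \<in> {j. b+2 \<le> j \<and> j \<le> t \<and> j mod 2 = b mod 2} \<longleftrightarrow> odd (i - b)"
    proof
      assume "Suc i \<in> {j. b+2 \<le> j \<and> j \<le> t \<and> j mod 2 = b mod 2}"
      then show "odd (i - b)" using parity_step[OF True] by simp
    next
      assume o: "odd (i - b)"
      then have "i - b \<noteq> 0" by (metis even_zero)
      then have "b + 2 \<le> Suc i" by linarith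
      then show "Suc i \<in> {j. b+2 \<le> j \<and> j \<le> t \<and> j mod 2 = b mod 2}" using o parity_step[OF True] Suc.prems by simp
    qed
    then show ?thesis unfolding card_le_step IH e by simp
  next
    case False
    then show ?thesis unfolding card_le_step IH by simp
  qed
qed

theorem lemma4p3:
  fixes t b :: nat and d :: "nat \<Rightarrow> nat" and K :: "'k::field itself"
  assumes "alg_closed_type K"
    and "thin_dimvec t d"
    and "e_num t d = 1"
    and "b = b_pos t d 1"
  shows "let J = J_set t d; c = Max J; T = (Delta J :: 'k rep);
             Pb = (Proj b :: 'k rep); Pb1 = (Proj (b - 1) :: 'k rep); Pc = (Proj c :: 'k rep);
             r = rdim Pb t; r1 = rdim Pb1 t;
             good = (\<lambda>\<phi>1 \<phi>2. rep_hom t Pb Pb1 \<phi>1 \<and> rep_hom t Pb Pc \<phi>2 \<and>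
                        \<phi>1 t (basis_vec r) = basis_vec r1 \<and> \<phi>2 t (basis_vec r) = basis_vec r)
         in (\<exists>\<phi>1 \<phi>2. good \<phi>1 \<phi>2) \<and>
            (\<forall>\<phi>1 \<phi>2. good \<phi>1 \<phi>2 \<longrightarrow>
               (let \<psi> = hom_pair Pb1 \<phi>1 \<phi>2 in
                 rep_hom t Pb (dsum Pb1 Pc) \<psi> \<and> hom_injective t Pb \<psi> \<and>
                 (\<exists>g. rep_hom t (dsum Pb1 Pc) T g \<and> hom_surjective t (dsum Pb1 Pc) T g \<and>
                      exact_at t Pb (dsum Pb1 Pc) \<psi> g)))"
proof -
  have thin: "thin_dimvec t d" by fact
  have "card (internal_even_ends t d) = 1" using assms(3) by (simp add: e_num_def)
  then obtain b0 where b0: "internal_even_ends t d = {b0}" by (rule card_1_singletonE)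
  have "b = b0" using assms(4) b0 by (simp add: b_pos_def)
  then have "b \<in> internal_even_ends t d" using b0 by simp
  then obtain s where s: "1 < s" "s \<le> b" "b < t" "d (b + 1) = 0" "even (b - s + 1)"
    unfolding internal_even_ends_def by blast
  have "b - s + 1 \<noteq> 1" using s(5) by (metis odd_one)
  then have b3: "3 \<le> b" using s(1,2) by linarith
  have "d t = 1" using thin by (simp add: thin_dimvec_def)
  then have "b + 1 \<noteq> t" using s(4) by auto
  then have bt: "b + 2 \<le> t" using s(3) by linarith
  define \<delta> where "\<delta> = b mod 2"
  define m where "m = b div 2"
  have bm: "b = 2 * m + \<delta>" unfolding m_def \<delta>_def using div_mult_mod_eq[of b 2] by linarith
  have d1: "\<delta> \<le> 1" unfolding \<delta>_def by simp
  have "b - 1 = 2 * (m + \<delta> - 1) + (1 - \<delta>)" using bm d1 b3 by linarith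
  then have b1mod: "(b - 1) mod 2 = 1 - \<delta>" using mod2_eq by simp
  define S1 where "S1 = {i'. 1 \<le> i' \<and> i' \<le> b - 1 \<and> i' mod 2 = (b - 1) mod 2}"
  define S2 where "S2 = {j. b+2 \<le> j \<and> j \<le> t \<and> j mod 2 = b mod 2}"
  define J0 where "J0 = S1 \<union> S2"
  have Jeq: "J_set t d = J0"
  proof -
    have eb: "b_pos t d 1 = b" using assms(4) by simp
    have aux: "\<And>x. x \<le> b - 1 \<Longrightarrow> x \<le> t" using bt by linarith
    show ?thesis
    proof (rule set_eqI)
      fix x
      show "x \<in> J_set t d \<longleftrightarrow> x \<in> J0"
        unfolding J_set_def Let_def assms(3) eb J0_def S1_def S2_def using bt aux[of x] by auto
    qed
  qed
  have aux2: "\<And>x. x \<le> b - Suc 0 \<Longrightarrow> x \<le> t" using bt by linarith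
  have finJ: "finite J0" unfolding J0_def S1_def S2_def by (rule finite_subset[of _ "{..t}"]) (auto dest: aux2)
  have b2J: "b + 2 \<in> J0" unfolding J0_def S2_def using bt by simp
  define c where "c = Max J0"
  have cJ: "c \<in> J0" unfolding c_def using finJ b2J Max_in by blast
  have cge: "\<And>j. j \<in> J0 \<Longrightarrow> j \<le> c" unfolding c_def using finJ Max_ge by blast
  have bc: "b + 2 \<le> c" using cge[OF b2J] .
  then have "c \<notin> S1" unfolding S1_def by auto
  then have cS2: "c \<in> S2" using cJ unfolding J0_def by auto
  then have ct: "c \<le> t" and cmod: "c mod 2 = \<delta>" unfolding S2_def \<delta>_def by auto
  have tc: "t \<le> c + 1"
  proof (rule ccontr)
    assume "\<not> t \<le> c + 1"
    then have "c + 2 \<in> J0" using cS2 bc unfolding J0_def S2_def by auto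
    then show False using cge by fastforce
  qed
  define n where "n = c div 2"
  have cn: "c = 2 * n + \<delta>" unfolding n_def using cmod div_mult_mod_eq[of c 2] by linarith
  have dT: "\<And>i. i \<le> t \<Longrightarrow> card {j \<in> J0. j \<le> i} = (min i (b-1) + (1-\<delta>)) div 2 + (i - b) div 2"
  proof -
    fix i assume i: "i \<le> t"
    have un: "{j \<in> J0. j \<le> i} = {j \<in> S1. j \<le> i} \<union> {j \<in> S2. j \<le> i}" unfolding J0_def by auto
    have dis: "{j \<in> S1. j \<le> i} \<inter> {j \<in> S2. j \<le> i} = {}" unfolding S1_def S2_def by auto
    have f1: "finite {j \<in> S1. j \<le> i}" by (rule finite_subset[of _ "{..i}"]) auto
    have f2: "finite {j \<in> S2. j \<le> i}" by (rule finite_subset[of _ "{..i}"]) auto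
    have c1: "card {j \<in> S1. j \<le> i} = (min i (b-1) + (1-\<delta>)) div 2"
      unfolding S1_def card_Proj_set by (simp only: b1mod)
    have c2: "card {j \<in> S2. j \<le> i} = (i - b) div 2" unfolding S2_def using card_tail[OF i] .
    show "card {j \<in> J0. j \<le> i} = (min i (b-1) + (1-\<delta>)) div 2 + (i - b) div 2"
      unfolding un card_Un_disjoint[OF f1 f2 dis] c1 c2 ..
  qed
  have M: "let T = (Delta J0 :: 'k rep);
             Pb = (Proj b :: 'k rep); Pb1 = (Proj (b - 1) :: 'k rep); Pc = (Proj c :: 'k rep);
             r = rdim Pb t; r1 = rdim Pb1 t;
             good = (\<lambda>\<phi>1 \<phi>2. rep_hom t Pb Pb1 \<phi>1 \<and> rep_hom t Pb Pc \<phi>2 \<and>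
                        \<phi>1 t (basis_vec r) = basis_vec r1 \<and> \<phi>2 t (basis_vec r) = basis_vec r)
         in (\<exists>\<phi>1 \<phi>2. good \<phi>1 \<phi>2) \<and>
            (\<forall>\<phi>1 \<phi>2. good \<phi>1 \<phi>2 \<longrightarrow>
               (let \<psi> = hom_pair Pb1 \<phi>1 \<phi>2 in
                 rep_hom t Pb (dsum Pb1 Pc) \<psi> \<and> hom_injective t Pb \<psi> \<and>
                 (\<exists>g. rep_hom t (dsum Pb1 Pc) T g \<and> hom_surjective t (dsum Pb1 Pc) T g \<and>
                      exact_at t Pb (dsum Pb1 Pc) \<psi> g)))"
    by (rule main[OF b3 bt bm d1 cn bc ct tc dT])
  show ?thesis using M unfolding Let_def Jeq c_def .
qed


end
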